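(* Let $G$ be a trigraph containing a fence gadget $F$ (with sides $A$, $B$) attached to a set $S$. Consider any partial contraction sequence from $G$, and the first contraction in it that involves two vertices of $V(F)$ (i.e., merges a part containing a vertex of $V(F)$ with another part containing a vertex of $V(F)$). Unless this contraction involves a pair $(a_i,b_j)$ with $a_i\in A$ and $b_j\in B$, the vertex created by it has red degree at least $5$.
   Context: A trigraph $G$ consists of a vertex set $V(G)$ and two disjoint sets of unordered pairs of distinct vertices: black edges and red edges. Contracting two distinct vertices $u,v$ replaces them by a new vertex $w$ such that, for every other vertex $z$, $wz$ is black if $uz,vz$ are both black, a non-edge if both are non-edges, and red otherwise. In a partial contraction sequence from $G$, each vertex $u$ of a later trigraph corresponds to the set $u(G)$ (its part) of vertices of $G$ merged into it; a contraction of $u,u'$ involves a vertex $v$ of $G$ if $v\in u(G)\cup u'(G)$, and involves a pair $v,v'$ if $v\in u(G),v'\in u'(G)$ or vice versa. A fence gadget is a trigraph $F$ on $A\cup B$, $A=\{a_1,\dots,a_6\}$, $B=\{b_1,\dots,b_6\}$, whose black edges are those of the cycles $a_1a_2a_3a_4a_5a_6a_1$ and $b_1b_2b_3b_4b_5b_6b_1$ together with $b_1a_6$, and whose red edges are $a_ib_i$ for $i\in[6]$ and $a_ib_{i+1}$ for $i\in[5]$. Inside a trigraph $G$, a fence gadget $F$ is attached to a nonempty set $S\subseteq V(G)\setminus V(F)$ if every vertex of $A$ is joined by a black edge to every vertex of $S$ and no vertex of $B$ is adjacent to a vertex of $S$. *)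

theory Defs
  imports Main
begin

text \<open>A trigraph is a triple (V, black edges, red edges); edges are unordered pairs
  represented as two-element sets.\<close>

type_synonym 'v trigraph = "'v set \<times> 'v set set \<times> 'v set set"

definition tverts :: "'v trigraph \<Rightarrow> 'v set" where "tverts T = fst T"
definition tblack :: "'v trigraph \<Rightarrow> 'v set set" where "tblack T = fst (snd T)"
definition tred :: "'v trigraph \<Rightarrow> 'v set set" where "tred T = snd (snd T)"

definition trigraph :: "'v trigraph \<Rightarrow> bool" where
  "trigraph T \<longleftrightarrow> finite (tverts T)
     \<and> tblack T \<union> tred T \<subseteq> {e. \<exists>x y. x \<noteq> y \<and> x \<in> tverts T \<and> y \<in> tverts T \<and> e = {x, y}}
     \<and> tblack T \<inter> tred T = {}"

definition red_degree :: "'v trigraph \<Rightarrow> 'v \<Rightarrow> nat" where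
  "red_degree T w = card {z. {w, z} \<in> tred T}"

text \<open>Trigraphs occurring in a partial contraction sequence from G have as vertices the
  parts (sets of vertices of G). Contracting parts u, v yields the new part u \<union> v.\<close>

definition contract :: "'a set trigraph \<Rightarrow> 'a set \<Rightarrow> 'a set \<Rightarrow> 'a set trigraph" where
  "contract T u v =
    (let V = tverts T; Bk = tblack T; Rd = tred T; w = u \<union> v in
     (insert w (V - {u, v}),
      {e \<in> Bk. u \<notin> e \<and> v \<notin> e}
        \<union> {{w, z} | z. z \<in> V - {u, v} \<and> {u, z} \<in> Bk \<and> {v, z} \<in> Bk},
      {e \<in> Rd. u \<notin> e \<and> v \<notin> e}
        \<union> {{w, z} | z. z \<in> V - {u, v}
              \<and> \<not> ({u, z} \<in> Bk \<and> {v, z} \<in> Bk)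
              \<and> \<not> ({u, z} \<notin> Bk \<union> Rd \<and> {v, z} \<notin> Bk \<union> Rd)}))"

definition lift :: "'a trigraph \<Rightarrow> 'a set trigraph" where
  "lift G = ((\<lambda>x. {x}) ` tverts G, (\<lambda>e. (\<lambda>x. {x}) ` e) ` tblack G,
             (\<lambda>e. (\<lambda>x. {x}) ` e) ` tred G)"

text \<open>A partial contraction sequence is given by the list of contracted pairs of parts;
  seq_state G cs k is the trigraph after the first k contractions.\<close>

definition seq_state :: "'a trigraph \<Rightarrow> ('a set \<times> 'a set) list \<Rightarrow> nat \<Rightarrow> 'a set trigraph" where
  "seq_state G cs k = foldl (\<lambda>T p. contract T (fst p) (snd p)) (lift G) (take k cs)"

definition partial_contraction_sequence :: "'a trigraph \<Rightarrow> ('a set \<times> 'a set) list \<Rightarrow> bool" where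
  "partial_contraction_sequence G cs \<longleftrightarrow>
     (\<forall>k < length cs. fst (cs ! k) \<noteq> snd (cs ! k)
        \<and> fst (cs ! k) \<in> tverts (seq_state G cs k)
        \<and> snd (cs ! k) \<in> tverts (seq_state G cs k))"

text \<open>Fence gadget with A = a ` {1..6}, B = b ` {1..6}.\<close>

definition fence_verts :: "(nat \<Rightarrow> 'a) \<Rightarrow> (nat \<Rightarrow> 'a) \<Rightarrow> 'a set" where
  "fence_verts a b = a ` {1..6} \<union> b ` {1..6}"

definition fence_black :: "(nat \<Rightarrow> 'a) \<Rightarrow> (nat \<Rightarrow> 'a) \<Rightarrow> 'a set set" where
  "fence_black a b =
     {{a i, a (i mod 6 + 1)} | i. i \<in> {1..6}}
     \<union> {{b i, b (i mod 6 + 1)} | i. i \<in> {1..6}}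
     \<union> {{b 1, a 6}}"

definition fence_red :: "(nat \<Rightarrow> 'a) \<Rightarrow> (nat \<Rightarrow> 'a) \<Rightarrow> 'a set set" where
  "fence_red a b =
     {{a i, b i} | i. i \<in> {1..6}} \<union> {{a i, b (i + 1)} | i. i \<in> {1..5}}"

definition contains_fence :: "'a trigraph \<Rightarrow> (nat \<Rightarrow> 'a) \<Rightarrow> (nat \<Rightarrow> 'a) \<Rightarrow> bool" where
  "contains_fence G a b \<longleftrightarrow>
     inj_on a {1..6} \<and> inj_on b {1..6} \<and> a ` {1..6} \<inter> b ` {1..6} = {}
     \<and> fence_verts a b \<subseteq> tverts G
     \<and> (\<forall>x \<in> fence_verts a b. \<forall>y \<in> fence_verts a b.
          ({x, y} \<in> tblack G \<longleftrightarrow> {x, y} \<in> fence_black a b)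
          \<and> ({x, y} \<in> tred G \<longleftrightarrow> {x, y} \<in> fence_red a b))"

definition fence_attached :: "'a trigraph \<Rightarrow> (nat \<Rightarrow> 'a) \<Rightarrow> (nat \<Rightarrow> 'a) \<Rightarrow> 'a set \<Rightarrow> bool" where
  "fence_attached G a b S \<longleftrightarrow>
     S \<noteq> {} \<and> S \<subseteq> tverts G - fence_verts a b
     \<and> (\<forall>i \<in> {1..6}. \<forall>s \<in> S. {a i, s} \<in> tblack G)
     \<and> (\<forall>j \<in> {1..6}. \<forall>s \<in> S. {b j, s} \<notin> tblack G \<and> {b j, s} \<notin> tred G)"

end

theory Submission
  imports Defs
begin

definition allB :: "'a trigraph \<Rightarrow> 'a set \<Rightarrow> 'a set \<Rightarrow> bool" where
  "allB G p q = (\<forall>x\<in>p. \<forall>y\<in>q. {x,y} \<in> tblack G)"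
definition allN :: "'a trigraph \<Rightarrow> 'a set \<Rightarrow> 'a set \<Rightarrow> bool" where
  "allN G p q = (\<forall>x\<in>p. \<forall>y\<in>q. {x,y} \<notin> tblack G \<and> {x,y} \<notin> tred G)"

definition pinv :: "'a trigraph \<Rightarrow> 'a set trigraph \<Rightarrow> bool" where
  "pinv G T = (finite (tverts T) \<and> (\<forall>p\<in>tverts T. p \<noteq> {} \<and> p \<subseteq> tverts G)
    \<and> (\<forall>p\<in>tverts T. \<forall>q\<in>tverts T. p \<noteq> q \<longrightarrow> p \<inter> q = {})
    \<and> \<Union>(tverts T) = tverts G
    \<and> tblack T \<union> tred T \<subseteq> {{p,q}|p q. p \<in> tverts T \<and> q \<in> tverts T \<and> p \<noteq> q}
    \<and> (\<forall>p\<in>tverts T. \<forall>q\<in>tverts T. p \<noteq> q \<longrightarrow>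
         ({p,q} \<in> tblack T \<longleftrightarrow> allB G p q) \<and> ({p,q} \<in> tred T \<longleftrightarrow> \<not> allB G p q \<and> \<not> allN G p q)))"

lemma sing_img: "{{x},{y}} \<in> (\<lambda>e. (\<lambda>x. {x}) ` e) ` E \<longleftrightarrow> {x,y} \<in> E"
proof
  assume "{{x},{y}} \<in> (\<lambda>e. (\<lambda>x. {x}) ` e) ` E"
  then obtain e where e: "e \<in> E" "{{x},{y}} = (\<lambda>x. {x}) ` e" by auto
  have "e = {x,y}"
  proof
    show "e \<subseteq> {x,y}" using e(2) by (auto simp: set_eq_iff)
    show "{x,y} \<subseteq> e" using e(2) by (auto simp: set_eq_iff)
  qed
  thus "{x,y} \<in> E" using e by simp
next
  assume "{x,y} \<in> E" thus "{{x},{y}} \<in> (\<lambda>e. (\<lambda>x. {x}) ` e) ` E" by (rule rev_image_eqI) auto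
qed

lemma pinv_lift: assumes "trigraph G" shows "pinv G (lift G)"
proof -
  have tv: "tverts (lift G) = (\<lambda>x. {x}) ` tverts G" and tb: "tblack (lift G) = (\<lambda>e. (\<lambda>x. {x}) ` e) ` tblack G"
    and tr: "tred (lift G) = (\<lambda>e. (\<lambda>x. {x}) ` e) ` tred G"
    by (simp_all add: lift_def tverts_def tblack_def tred_def)
  have fin: "finite (tverts G)" and E: "tblack G \<union> tred G \<subseteq> {e. \<exists>x y. x \<noteq> y \<and> x \<in> tverts G \<and> y \<in> tverts G \<and> e = {x, y}}"
    and D: "tblack G \<inter> tred G = {}" using assms by (auto simp: trigraph_def)
  have "tblack (lift G) \<union> tred (lift G) \<subseteq> {{p,q}|p q. p \<in> tverts (lift G) \<and> q \<in> tverts (lift G) \<and> p \<noteq> q}"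
  proof
    fix e' assume "e' \<in> tblack (lift G) \<union> tred (lift G)"
    then obtain e where "e \<in> tblack G \<union> tred G" "e' = (\<lambda>x. {x}) ` e" using tb tr by auto
    then obtain x y where "x \<noteq> y" "x \<in> tverts G" "y \<in> tverts G" "e' = {{x},{y}}" using E by blast
    thus "e' \<in> {{p,q}|p q. p \<in> tverts (lift G) \<and> q \<in> tverts (lift G) \<and> p \<noteq> q}" using tv by auto
  qed
  moreover have "\<forall>p\<in>tverts (lift G). \<forall>q\<in>tverts (lift G). p \<noteq> q \<longrightarrow>
         ({p,q} \<in> tblack (lift G) \<longleftrightarrow> allB G p q) \<and> ({p,q} \<in> tred (lift G) \<longleftrightarrow> \<not> allB G p q \<and> \<not> allN G p q)"
    using D by (auto simp: tv tb tr sing_img allB_def allN_def)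
  ultimately show ?thesis using fin unfolding pinv_def by (simp add: tv)
qed

lemma contract_parts:
  "tverts (contract T u v) = insert (u \<union> v) (tverts T - {u, v})"
  "tblack (contract T u v) = {e \<in> tblack T. u \<notin> e \<and> v \<notin> e}
        \<union> {{u \<union> v, z} | z. z \<in> tverts T - {u, v} \<and> {u, z} \<in> tblack T \<and> {v, z} \<in> tblack T}"
  "tred (contract T u v) = {e \<in> tred T. u \<notin> e \<and> v \<notin> e}
        \<union> {{u \<union> v, z} | z. z \<in> tverts T - {u, v}
              \<and> \<not> ({u, z} \<in> tblack T \<and> {v, z} \<in> tblack T)
              \<and> \<not> ({u, z} \<notin> tblack T \<union> tred T \<and> {v, z} \<notin> tblack T \<union> tred T)}"
  by (simp_all add: contract_def Let_def tverts_def tblack_def tred_def)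

lemma allB_un: "allB G (u \<union> v) z \<longleftrightarrow> allB G u z \<and> allB G v z"
  by (auto simp: allB_def)
lemma allN_un: "allN G (u \<union> v) z \<longleftrightarrow> allN G u z \<and> allN G v z"
  by (auto simp: allN_def)
lemma allB_sym: "allB G p q = allB G q p"
  unfolding allB_def by (metis insert_commute)
lemma allN_sym: "allN G p q = allN G q p"
  unfolding allN_def by (metis insert_commute)
lemma allB_N: "p \<noteq> {} \<Longrightarrow> q \<noteq> {} \<Longrightarrow> allN G p q \<Longrightarrow> \<not> allB G p q"
  by (auto simp: allB_def allN_def)

lemma pinv_step:
  assumes I: "pinv G T" and u: "u \<in> tverts T" and v: "v \<in> tverts T" and uv: "u \<noteq> v"
  shows "pinv G (contract T u v)"
proof -
  let ?P = "tverts T" and ?Bk = "tblack T" and ?Rd = "tred T" 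
  define w where "w = u \<union> v"
  have cp: "tverts (contract T u v) = insert w (tverts T - {u, v})"
    "tblack (contract T u v) = {e \<in> tblack T. u \<notin> e \<and> v \<notin> e}
        \<union> {{w, z} | z. z \<in> tverts T - {u, v} \<and> {u, z} \<in> tblack T \<and> {v, z} \<in> tblack T}"
    "tred (contract T u v) = {e \<in> tred T. u \<notin> e \<and> v \<notin> e}
        \<union> {{w, z} | z. z \<in> tverts T - {u, v}
              \<and> \<not> ({u, z} \<in> tblack T \<and> {v, z} \<in> tblack T)
              \<and> \<not> ({u, z} \<notin> tblack T \<union> tred T \<and> {v, z} \<notin> tblack T \<union> tred T)}"
    unfolding w_def by (rule contract_parts)+
  note I' = I[unfolded pinv_def]
  have fin: "finite ?P" using I' by (elim conjE) assumption
  have neB: "\<forall>p\<in>?P. p \<noteq> {} \<and> p \<subseteq> tverts G" using I' by (elim conjE) assumption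
  have djB: "\<forall>p\<in>?P. \<forall>q\<in>?P. p \<noteq> q \<longrightarrow> p \<inter> q = {}" using I' by (elim conjE) assumption
  have un: "\<Union>?P = tverts G" using I' by (elim conjE) assumption
  have ed: "?Bk \<union> ?Rd \<subseteq> {{p,q}|p q. p \<in> ?P \<and> q \<in> ?P \<and> p \<noteq> q}" using I' by (elim conjE) assumption
  have chB: "\<forall>p\<in>?P. \<forall>q\<in>?P. p \<noteq> q \<longrightarrow>
         ({p,q} \<in> ?Bk \<longleftrightarrow> allB G p q) \<and> ({p,q} \<in> ?Rd \<longleftrightarrow> \<not> allB G p q \<and> \<not> allN G p q)"
    using I' by (elim conjE) assumption
  have ne: "\<And>p. p \<in> ?P \<Longrightarrow> p \<noteq> {} \<and> p \<subseteq> tverts G" using neB by (rule bspec)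
  have dj: "\<And>p q. p \<in> ?P \<Longrightarrow> q \<in> ?P \<Longrightarrow> p \<noteq> q \<Longrightarrow> p \<inter> q = {}" using djB by simp
  have ch: "\<And>p q. p \<in> ?P \<Longrightarrow> q \<in> ?P \<Longrightarrow> p \<noteq> q \<Longrightarrow>
         ({p,q} \<in> ?Bk \<longleftrightarrow> allB G p q) \<and> ({p,q} \<in> ?Rd \<longleftrightarrow> \<not> allB G p q \<and> \<not> allN G p q)"
    using chB by simp
  have wnP: "w \<notin> ?P"
  proof
    assume "w \<in> ?P"
    have "u \<noteq> {}" "v \<noteq> {}" using ne u v by auto
    show False
    proof (cases "w = u")
      case True then have "v \<subseteq> u" unfolding w_def by auto
      thus False using dj[OF u v uv] \<open>v \<noteq> {}\<close> by auto
    next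
      case False then have "w \<inter> u = {}" using dj[OF \<open>w \<in> ?P\<close> u] by auto
      thus False using \<open>u \<noteq> {}\<close> unfolding w_def by auto
    qed
  qed
  have edge_notin: "\<And>e. e \<in> ?Bk \<union> ?Rd \<Longrightarrow> w \<notin> e"
  proof -
    fix e assume "e \<in> ?Bk \<union> ?Rd"
    from subsetD[OF ed this] obtain p q where "e = {p,q}" "p \<in> ?P" "q \<in> ?P" by blast
    thus "w \<notin> e" using wnP by auto
  qed
  have wne: "w \<noteq> {}" using ne u unfolding w_def by auto
  have nonedge: "\<And>z. z \<in> ?P \<Longrightarrow> z \<noteq> u \<Longrightarrow> ({u,z} \<notin> ?Bk \<union> ?Rd \<longleftrightarrow> allN G u z)"
  proof -
    fix z assume z: "z \<in> ?P" "z \<noteq> u"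
    have "z \<noteq> {}" "u \<noteq> {}" using ne z u by auto
    then show "?thesis z" using ch[OF u z(1)] z(2) allB_N[of u z G] by auto
  qed
  have nonedgev: "\<And>z. z \<in> ?P \<Longrightarrow> z \<noteq> v \<Longrightarrow> ({v,z} \<notin> ?Bk \<union> ?Rd \<longleftrightarrow> allN G v z)"
  proof -
    fix z assume z: "z \<in> ?P" "z \<noteq> v"
    have "z \<noteq> {}" "v \<noteq> {}" using ne z v by auto
    then show "?thesis z" using ch[OF v z(1)] z(2) allB_N[of v z G] by auto
  qed
  have chw: "\<And>z. z \<in> ?P - {u,v} \<Longrightarrow>
      ({w,z} \<in> tblack (contract T u v) \<longleftrightarrow> allB G w z) \<and>
      ({w,z} \<in> tred (contract T u v) \<longleftrightarrow> \<not> allB G w z \<and> \<not> allN G w z)"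
  proof -
    fix z assume z: "z \<in> ?P - {u,v}"
    have zw: "z \<noteq> w" using z wnP by auto
    have zP: "z \<in> ?P" and zu: "u \<noteq> z" and zv: "v \<noteq> z" using z by auto
    have nB: "{w,z} \<notin> ?Bk" "{w,z} \<notin> ?Rd" using edge_notin by auto
    have deq: "\<And>z'. {w,z} = {w,z'} \<longleftrightarrow> z = z'" using zw by (auto simp: doubleton_eq_iff)
    have e1: "{w,z} \<in> tblack (contract T u v) \<longleftrightarrow> {u,z} \<in> ?Bk \<and> {v,z} \<in> ?Bk"
      unfolding cp using nB deq z by auto
    have e2: "{w,z} \<in> tred (contract T u v) \<longleftrightarrow>
       \<not> ({u, z} \<in> ?Bk \<and> {v, z} \<in> ?Bk) \<and> \<not> ({u, z} \<notin> ?Bk \<union> ?Rd \<and> {v, z} \<notin> ?Bk \<union> ?Rd)"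
      unfolding cp using nB deq z by auto
    show "?thesis z" unfolding e1 e2 unfolding w_def allB_un allN_un
      using ch[OF u zP zu] ch[OF v zP zv] nonedge[OF zP zu[symmetric]] nonedgev[OF zP zv[symmetric]] by auto
  qed
  have cho: "\<And>p q. p \<in> ?P - {u,v} \<Longrightarrow> q \<in> ?P - {u,v} \<Longrightarrow>
      ({p,q} \<in> tblack (contract T u v) \<longleftrightarrow> {p,q} \<in> ?Bk) \<and>
      ({p,q} \<in> tred (contract T u v) \<longleftrightarrow> {p,q} \<in> ?Rd)"
  proof -
    fix p q assume p: "p \<in> ?P - {u,v}" and q: "q \<in> ?P - {u,v}"
    have nw: "w \<notin> {p,q}" using p q wnP by auto
    have "\<And>z. {p,q} \<noteq> {w,z}" using nw by auto
    moreover have "u \<notin> {p,q}" "v \<notin> {p,q}" using p q by auto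
    ultimately show "?thesis p q" unfolding cp by auto
  qed
  show ?thesis unfolding pinv_def
  proof (intro conjI)
    show "finite (tverts (contract T u v))" using fin by (simp add: cp)
    show "\<forall>p\<in>tverts (contract T u v). p \<noteq> {} \<and> p \<subseteq> tverts G" using ne u v by (auto simp: cp w_def)
    show "\<forall>p\<in>tverts (contract T u v). \<forall>q\<in>tverts (contract T u v). p \<noteq> q \<longrightarrow> p \<inter> q = {}"
    proof (intro ballI impI)
      fix p q assume p: "p \<in> tverts (contract T u v)" and q: "q \<in> tverts (contract T u v)" and pq: "p \<noteq> q"
      have wz: "\<And>z. z \<in> ?P - {u,v} \<Longrightarrow> w \<inter> z = {}"
      proof -
        fix z assume z: "z \<in> ?P - {u,v}"
        have "u \<inter> z = {}" "v \<inter> z = {}" using dj[OF u, of z] dj[OF v, of z] z by auto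
        thus "w \<inter> z = {}" unfolding w_def by auto
      qed
      show "p \<inter> q = {}"
      proof (cases "p = w")
        case True
        then have "q \<in> ?P - {u,v}" using q pq by (auto simp: cp)
        thus ?thesis using wz True by blast
      next
        case False
        then have p': "p \<in> ?P - {u,v}" using p by (auto simp: cp)
        show ?thesis
        proof (cases "q = w")
          case True thus ?thesis using wz[OF p'] by auto
        next
          case False
          then have "q \<in> ?P - {u,v}" using q by (auto simp: cp)
          thus ?thesis using dj p' pq by auto
        qed
      qed
    qed
    show "\<Union>(tverts (contract T u v)) = tverts G" using un u v by (auto simp: cp w_def)
    show "tblack (contract T u v) \<union> tred (contract T u v)
       \<subseteq> {{p,q}|p q. p \<in> tverts (contract T u v) \<and> q \<in> tverts (contract T u v) \<and> p \<noteq> q}"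
    proof
      fix e assume e: "e \<in> tblack (contract T u v) \<union> tred (contract T u v)"
      show "e \<in> {{p,q}|p q. p \<in> tverts (contract T u v) \<and> q \<in> tverts (contract T u v) \<and> p \<noteq> q}"
      proof (cases "e \<in> ?Bk \<union> ?Rd")
        case True
        then obtain p q where "e = {p,q}" "p \<in> ?P" "q \<in> ?P" "p \<noteq> q" using subsetD[OF ed True] by blast
        moreover have "u \<notin> e" "v \<notin> e" using e True unfolding cp
          using edge_notin by auto
        ultimately show ?thesis unfolding cp by blast
      next
        case False
        then obtain z where "e = {w, z}" "z \<in> ?P - {u,v}" using e False unfolding cp by blast
        moreover have "z \<noteq> w" using calculation wnP by auto
        ultimately show ?thesis unfolding cp by blast
      qed
    qed
    show "\<forall>p\<in>tverts (contract T u v). \<forall>q\<in>tverts (contract T u v). p \<noteq> q \<longrightarrow>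
         ({p,q} \<in> tblack (contract T u v) \<longleftrightarrow> allB G p q) \<and>
         ({p,q} \<in> tred (contract T u v) \<longleftrightarrow> \<not> allB G p q \<and> \<not> allN G p q)"
    proof (intro ballI impI)
      fix p q assume p: "p \<in> tverts (contract T u v)" and q: "q \<in> tverts (contract T u v)" and pq: "p \<noteq> q"
      show "({p,q} \<in> tblack (contract T u v) \<longleftrightarrow> allB G p q) \<and>
         ({p,q} \<in> tred (contract T u v) \<longleftrightarrow> \<not> allB G p q \<and> \<not> allN G p q)"
      proof (cases "p = w")
        case True
        then have "q \<in> ?P - {u,v}" using q pq by (auto simp: cp)
        thus ?thesis using chw True by simp
      next
        case False
        then have p': "p \<in> ?P - {u,v}" using p by (auto simp: cp)
        show ?thesis
        proof (cases "q = w")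
          case True
          have "allB G p q = allB G q p" "allN G p q = allN G q p"
            by (rule allB_sym, rule allN_sym)
          thus ?thesis using chw[OF p'] True by (simp add: insert_commute)
        next
          case False
          then have q': "q \<in> ?P - {u,v}" using q by (auto simp: cp)
          thus ?thesis using cho[OF p' q'] ch[of p q] p' q' pq by auto
        qed
      qed
    qed
  qed
qed


definition PB :: "(nat \<times> nat) list" where
  "PB = [(7,6),(7,8),(8,9),(9,10),(10,11),(11,12),(12,7),(1,2),(2,3),(3,4),(4,5),(5,6),(6,1)]"
definition PR :: "(nat \<times> nat) list" where
  "PR = [(1,8),(2,9),(3,10),(4,11),(5,12),(1,7),(2,8),(3,9),(4,10),(5,11),(6,12)]"
definition cB :: "nat \<Rightarrow> nat \<Rightarrow> bool" where "cB m n = ((m,n) \<in> set PB \<or> (n,m) \<in> set PB)"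
definition cR :: "nat \<Rightarrow> nat \<Rightarrow> bool" where "cR m n = ((m,n) \<in> set PR \<or> (n,m) \<in> set PR)"
definition wit :: "nat \<Rightarrow> nat \<Rightarrow> nat \<Rightarrow> bool" where
  "wit m n f = (\<not> (cB m f \<and> cB n f) \<and> \<not> (\<not> cB m f \<and> \<not> cR m f \<and> \<not> cB n f \<and> \<not> cR n f))"
definition SP :: "(nat \<times> nat) list" where "SP = [(1,2),(1,3),(1,4),(1,5),(1,6),(2,1),(2,3),(2,4),(2,5),(2,6),(3,1),(3,2),(3,4),(3,5),(3,6),(4,1),(4,2),(4,3),(4,5),(4,6),(5,1),(5,2),(5,3),(5,4),(5,6),(6,1),(6,2),(6,3),(6,4),(6,5),(7,8),(7,9),(7,10),(7,11),(7,12),(8,7),(8,9),(8,10),(8,11),(8,12),(9,7),(9,8),(9,10),(9,11),(9,12),(10,7),(10,8),(10,9),(10,11),(10,12),(11,7),(11,8),(11,9),(11,10),(11,12),(12,7),(12,8),(12,9),(12,10),(12,11)]"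
lemma comb: "list_all (\<lambda>(m,n). 5 \<le> length (filter (\<lambda>f. f \<noteq> m \<and> f \<noteq> n \<and> wit m n f) [1..<13])) SP"
  by code_simp
lemma twelve: "(m::nat) \<in> {1..12} \<Longrightarrow> m=1 \<or> m=2 \<or> m=3 \<or> m=4 \<or> m=5 \<or> m=6 \<or> m=7 \<or> m=8 \<or> m=9 \<or> m=10 \<or> m=11 \<or> m=12"
  by (simp add: atLeastAtMost_iff) presburger
lemma six: "{1..6::nat} = {1,2,3,4,5,6}" by auto

lemma SP_mem: "m \<in> {1..12} \<Longrightarrow> n \<in> {1..12} \<Longrightarrow> m \<noteq> n \<Longrightarrow> (m \<le> 6 \<longleftrightarrow> n \<le> 6) \<Longrightarrow> (m,n) \<in> set SP"
  apply (drule twelve)+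
  apply (elim disjE)
  apply (simp_all add: SP_def)
  done

lemma comb': assumes "m \<in> {1..12}" "n \<in> {1..12}" "m \<noteq> n" "(m \<le> 6 \<longleftrightarrow> n \<le> 6)"
  shows "5 \<le> card {f \<in> {1..12}. f \<noteq> m \<and> f \<noteq> n \<and> wit m n f}"
proof -
  let ?P = "\<lambda>f. f \<noteq> m \<and> f \<noteq> n \<and> wit m n f"
  have "5 \<le> length (filter ?P [1..<13])" using comb SP_mem[OF assms] unfolding list_all_iff by fastforce
  also have "length (filter ?P [1..<13]) = card (set (filter ?P [1..<13]))"
    by (rule distinct_card[symmetric]) simp
  also have "set (filter ?P [1..<13]) = {f \<in> {1..12}. ?P f}" by auto
  finally show ?thesis .
qed

lemma img_pairs: assumes "inj_on f A" "set L \<subseteq> A \<times> A" "m \<in> A" "n \<in> A"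
  shows "{f m, f n} \<in> (\<lambda>(i,j). {f i, f j}) ` set L \<longleftrightarrow> (m,n) \<in> set L \<or> (n,m) \<in> set L"
proof
  assume "{f m, f n} \<in> (\<lambda>(i,j). {f i, f j}) ` set L"
  then obtain i j where ij: "(i,j) \<in> set L" "{f m, f n} = {f i, f j}" by auto
  have "i \<in> A" "j \<in> A" using ij(1) assms(2) by auto
  then have "(m = i \<and> n = j) \<or> (m = j \<and> n = i)" using ij(2) assms inj_on_eq_iff[OF assms(1)]
    by (auto simp: doubleton_eq_iff)
  thus "(m,n) \<in> set L \<or> (n,m) \<in> set L" using ij(1) by auto
next
  assume "(m,n) \<in> set L \<or> (n,m) \<in> set L"
  thus "{f m, f n} \<in> (\<lambda>(i,j). {f i, f j}) ` set L" by (force simp: insert_commute)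
qed

definition vx :: "(nat \<Rightarrow> 'a) \<Rightarrow> (nat \<Rightarrow> 'a) \<Rightarrow> nat \<Rightarrow> 'a" where
  "vx a b c = (if c \<le> 6 then a c else b (c - 6))"

lemma comp6: "{f i |i. i \<in> {1..6::nat}} = {f 1, f 2, f 3, f 4, f 5, f 6}"
  unfolding six by blast
lemma comp5: "{f i |i. i \<in> {1..5::nat}} = {f 1, f 2, f 3, f 4, f 5}"
proof -
  have "{1..5::nat} = {1,2,3,4,5}" by auto
  thus ?thesis unfolding \<open>{1..5::nat} = {1,2,3,4,5}\<close> by blast
qed
lemma fb_eq: "fence_black a b = (\<lambda>(i,j). {vx a b i, vx a b j}) ` set PB"
  unfolding fence_black_def PB_def comp6[where f="\<lambda>i. {a i, a (i mod 6 + 1)}"] comp6[where f="\<lambda>i. {b i, b (i mod 6 + 1)}"]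
  by (simp add: vx_def numeral_2_eq_2[symmetric])
lemma fr_eq: "fence_red a b = (\<lambda>(i,j). {vx a b i, vx a b j}) ` set PR"
  unfolding fence_red_def PR_def comp6[where f="\<lambda>i. {a i, b i}"] comp5[where f="\<lambda>i. {a i, b (i+1)}"]
  by (simp add: vx_def numeral_2_eq_2[symmetric])

lemma vx_inj: assumes "inj_on a {1..6}" "inj_on b {1..6}" "a ` {1..6} \<inter> b ` {1..6} = {}"
  shows "inj_on (vx a b) {1..12}"
proof
  fix m n assume m: "m \<in> {1..12}" and n: "n \<in> {1..12}" and e: "vx a b m = vx a b n"
  show "m = n"
  proof (cases "m \<le> 6"; cases "n \<le> 6")
    assume "m \<le> 6" "n \<le> 6" thus ?thesis using e m n inj_on_eq_iff[OF assms(1), of m n] by (simp add: vx_def)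
  next
    assume h: "m \<le> 6" "\<not> n \<le> 6"
    have "a m \<in> a ` {1..6}" "b (n-6) \<in> b ` {1..6}" using h m n by (auto intro!: imageI)
    thus ?thesis using e h assms(3) by (auto simp: vx_def)
  next
    assume h: "\<not> m \<le> 6" "n \<le> 6"
    have "a n \<in> a ` {1..6}" "b (m-6) \<in> b ` {1..6}" using h m n by (auto intro!: imageI)
    thus ?thesis using e h assms(3) by (auto simp: vx_def)
  next
    assume h: "\<not> m \<le> 6" "\<not> n \<le> 6"
    have "m-6 \<in> {1..6}" "n-6 \<in> {1..6}" using h m n by auto
    then have "m - 6 = n - 6" using e h inj_on_eq_iff[OF assms(2), of "m-6" "n-6"] by (simp add: vx_def)
    thus ?thesis using h by simp
  qed
qed

lemma PB_sub: "set PB \<subseteq> {1..12} \<times> {1..12}" by (simp add: PB_def)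
lemma PR_sub: "set PR \<subseteq> {1..12} \<times> {1..12}" by (simp add: PR_def)


lemma seq_state_0: "seq_state G cs 0 = lift G"
  by (simp add: seq_state_def)

lemma seq_state_Suc: "j < length cs \<Longrightarrow>
   seq_state G cs (Suc j) = contract (seq_state G cs j) (fst (cs ! j)) (snd (cs ! j))"
  by (simp add: seq_state_def take_Suc_conv_app_nth)

lemma pinv_seq:
  assumes "trigraph G" "partial_contraction_sequence G cs"
  shows "j \<le> length cs \<Longrightarrow> pinv G (seq_state G cs j)"
proof (induction j)
  case 0 thus ?case using pinv_lift[OF assms(1)] by (simp add: seq_state_0)
next
  case (Suc j)
  then have j: "j < length cs" by simp
  have h: "fst (cs ! j) \<noteq> snd (cs ! j)" "fst (cs ! j) \<in> tverts (seq_state G cs j)"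
        "snd (cs ! j) \<in> tverts (seq_state G cs j)"
    using assms(2) j unfolding partial_contraction_sequence_def by blast+
  show ?case unfolding seq_state_Suc[OF j]
    using pinv_step[OF Suc.IH h(2) h(3) h(1)] j by simp
qed

lemma fence_one:
  assumes "partial_contraction_sequence G cs"
    and "\<forall>j < k. fst (cs ! j) \<inter> F = {} \<or> snd (cs ! j) \<inter> F = {}"
    and "k \<le> length cs"
  shows "j \<le> k \<Longrightarrow> \<forall>p\<in>tverts (seq_state G cs j). \<forall>x\<in>p \<inter> F. \<forall>y\<in>p \<inter> F. x = y"
proof (induction j)
  case 0 thus ?case by (auto simp: seq_state_0 lift_def tverts_def)
next
  case (Suc j)
  then have jk: "j < k" by simp
  then have j: "j < length cs" using assms(3) by simp
  let ?u = "fst (cs ! j)" and ?v = "snd (cs ! j)"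
  have h: "?u \<in> tverts (seq_state G cs j)" "?v \<in> tverts (seq_state G cs j)"
    using assms(1) j unfolding partial_contraction_sequence_def by blast+
  have IH: "\<forall>p\<in>tverts (seq_state G cs j). \<forall>x\<in>p \<inter> F. \<forall>y\<in>p \<inter> F. x = y" using Suc by simp
  have e: "?u \<inter> F = {} \<or> ?v \<inter> F = {}" using assms(2) jk by blast
  show ?case unfolding seq_state_Suc[OF j] contract_parts
  proof (intro ballI)
    fix p x y assume p: "p \<in> insert (?u \<union> ?v) (tverts (seq_state G cs j) - {?u, ?v})"
      and x: "x \<in> p \<inter> F" and y: "y \<in> p \<inter> F"
    show "x = y"
    proof (cases "p = ?u \<union> ?v")
      case True
      show ?thesis
      proof (cases "?u \<inter> F = {}")
        case True
        then have "x \<in> ?v \<inter> F" "y \<in> ?v \<inter> F" using x y \<open>p = ?u \<union> ?v\<close> by auto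
        thus ?thesis using IH h(2) by blast
      next
        case False
        then have "?v \<inter> F = {}" using e by blast
        then have "x \<in> ?u \<inter> F" "y \<in> ?u \<inter> F" using x y \<open>p = ?u \<union> ?v\<close> by auto
        thus ?thesis using IH h(1) by blast
      qed
    next
      case False
      then have "p \<in> tverts (seq_state G cs j)" using p by blast
      thus ?thesis using IH x y by blast
    qed
  qed
qed

lemma Fvx: "fence_verts a b = vx a b ` {1..12}"
proof
  show "fence_verts a b \<subseteq> vx a b ` {1..12}"
  proof
    fix x assume "x \<in> fence_verts a b"
    then consider i where "i \<in> {1..6}" "x = a i" | i where "i \<in> {1..6}" "x = b i"
      unfolding fence_verts_def by blast
    thus "x \<in> vx a b ` {1..12}"
    proof cases
      case 1 thus ?thesis by (intro rev_image_eqI[of i]) (auto simp: vx_def)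
    next
      case 2 thus ?thesis by (intro rev_image_eqI[of "i+6"]) (auto simp: vx_def)
    qed
  qed
  show "vx a b ` {1..12} \<subseteq> fence_verts a b"
  proof
    fix x assume "x \<in> vx a b ` {1..12}"
    then obtain i where i: "i \<in> {1..12}" "x = vx a b i" by blast
    show "x \<in> fence_verts a b"
    proof (cases "i \<le> 6")
      case True thus ?thesis using i by (auto simp: vx_def fence_verts_def)
    next
      case False
      then have "i - 6 \<in> {1..6}" using i by auto
      thus ?thesis using i False unfolding vx_def fence_verts_def by auto
    qed
  qed
qed

theorem lemma4p5:
  fixes G :: "'a trigraph" and a b :: "nat \<Rightarrow> 'a" and S :: "'a set"
    and cs :: "('a set \<times> 'a set) list" and k :: nat and u v :: "'a set"
  assumes "trigraph G"
    and "contains_fence G a b"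
    and "fence_attached G a b S"
    and "partial_contraction_sequence G cs"
    and "k < length cs" and "cs ! k = (u, v)"
    and "u \<inter> fence_verts a b \<noteq> {}" and "v \<inter> fence_verts a b \<noteq> {}"
    and "\<forall>j < k. fst (cs ! j) \<inter> fence_verts a b = {} \<or> snd (cs ! j) \<inter> fence_verts a b = {}"
    and "\<not> (\<exists>i \<in> {1..6}. \<exists>j \<in> {1..6}. (a i \<in> u \<and> b j \<in> v) \<or> (a i \<in> v \<and> b j \<in> u))"
  shows "red_degree (seq_state G cs (Suc k)) (u \<union> v) \<ge> 5"
proof -
  let ?F = "fence_verts a b"
  let ?T = "seq_state G cs k"
  let ?P = "tverts ?T"
  let ?Bk = "tblack ?T" and ?Rd = "tred ?T"
  let ?vx = "vx a b"
  have uP: "u \<in> ?P" "v \<in> ?P" "u \<noteq> v"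
    using assms(4,5,6) unfolding partial_contraction_sequence_def by (metis fst_conv snd_conv)+
  have I: "pinv G ?T" using pinv_seq[OF assms(1,4)] assms(5) by simp
  have T': "seq_state G cs (Suc k) = contract ?T u v" using seq_state_Suc[OF assms(5)] assms(6) by simp
  have I': "pinv G (contract ?T u v)" using pinv_step[OF I uP] .
  have one: "\<forall>p\<in>?P. \<forall>x\<in>p \<inter> ?F. \<forall>y\<in>p \<inter> ?F. x = y"
    using fence_one[OF assms(4) assms(9) less_imp_le[OF assms(5)] order_refl] .
  have inja: "inj_on a {1..6}" and injb: "inj_on b {1..6}" and dab: "a ` {1..6} \<inter> b ` {1..6} = {}"
    and FG: "?F \<subseteq> tverts G"
    and edgeG: "\<forall>x \<in> ?F. \<forall>y \<in> ?F. ({x, y} \<in> tblack G \<longleftrightarrow> {x, y} \<in> fence_black a b)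
          \<and> ({x, y} \<in> tred G \<longleftrightarrow> {x, y} \<in> fence_red a b)"
    using assms(2) unfolding contains_fence_def by blast+
  have vinj: "inj_on ?vx {1..12}" by (rule vx_inj[OF inja injb dab])
  have vF: "\<And>i. i \<in> {1..12} \<Longrightarrow> ?vx i \<in> ?F" unfolding Fvx by (rule imageI)
  have trB: "\<And>i j. i \<in> {1..12} \<Longrightarrow> j \<in> {1..12} \<Longrightarrow> {?vx i, ?vx j} \<in> tblack G \<longleftrightarrow> cB i j"
  proof -
    fix i j :: nat assume i: "i \<in> {1..12}" and j: "j \<in> {1..12}"
    have "{?vx i, ?vx j} \<in> tblack G \<longleftrightarrow> {?vx i, ?vx j} \<in> fence_black a b" using edgeG[rule_format, OF vF[OF i] vF[OF j]] by (rule conjunct1)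
    also have "\<dots> \<longleftrightarrow> cB i j" unfolding fb_eq cB_def by (rule img_pairs[OF vinj PB_sub i j])
    finally show "{?vx i, ?vx j} \<in> tblack G \<longleftrightarrow> cB i j" .
  qed
  have trR: "\<And>i j. i \<in> {1..12} \<Longrightarrow> j \<in> {1..12} \<Longrightarrow> {?vx i, ?vx j} \<in> tred G \<longleftrightarrow> cR i j"
  proof -
    fix i j :: nat assume i: "i \<in> {1..12}" and j: "j \<in> {1..12}"
    have "{?vx i, ?vx j} \<in> tred G \<longleftrightarrow> {?vx i, ?vx j} \<in> fence_red a b" using edgeG[rule_format, OF vF[OF i] vF[OF j]] by (rule conjunct2)
    also have "\<dots> \<longleftrightarrow> cR i j" unfolding fr_eq cR_def by (rule img_pairs[OF vinj PR_sub i j])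
    finally show "{?vx i, ?vx j} \<in> tred G \<longleftrightarrow> cR i j" .
  qed
  note I0 = I[unfolded pinv_def]
  have ne: "\<forall>p\<in>?P. p \<noteq> {} \<and> p \<subseteq> tverts G" using I0 by (elim conjE) assumption
  have djB: "\<forall>p\<in>?P. \<forall>q\<in>?P. p \<noteq> q \<longrightarrow> p \<inter> q = {}" using I0 by (elim conjE) assumption
  have un: "\<Union>?P = tverts G" using I0 by (elim conjE) assumption
  have chB: "\<forall>p\<in>?P. \<forall>q\<in>?P. p \<noteq> q \<longrightarrow>
         ({p,q} \<in> ?Bk \<longleftrightarrow> allB G p q) \<and> ({p,q} \<in> ?Rd \<longleftrightarrow> \<not> allB G p q \<and> \<not> allN G p q)"
    using I0 by (elim conjE) assumption
  have ed': "tblack (contract ?T u v) \<union> tred (contract ?T u v) \<subseteq>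
      {{p,q}|p q. p \<in> tverts (contract ?T u v) \<and> q \<in> tverts (contract ?T u v) \<and> p \<noteq> q}"
    using I'[unfolded pinv_def] by (elim conjE) assumption
  have fin': "finite (tverts (contract ?T u v))" using I'[unfolded pinv_def] by (elim conjE) assumption
  obtain x where x: "x \<in> u" "x \<in> ?F" using assms(7) by blast
  obtain m where m: "m \<in> {1..12}" "x = ?vx m" using x(2) unfolding Fvx by blast
  obtain y where y: "y \<in> v" "y \<in> ?F" using assms(8) by blast
  obtain n where n: "n \<in> {1..12}" "y = ?vx n" using y(2) unfolding Fvx by blast
  have uv_dj: "u \<inter> v = {}" using djB uP by blast
  have mn: "m \<noteq> n" using uv_dj x y m n by auto
  have side: "m \<le> 6 \<longleftrightarrow> n \<le> 6"
  proof (rule ccontr)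
    assume "\<not> (m \<le> 6 \<longleftrightarrow> n \<le> 6)"
    then consider "m \<le> 6" "\<not> n \<le> 6" | "\<not> m \<le> 6" "n \<le> 6" by blast
    thus False
    proof cases
      case 1
      have "m \<in> {1..6}" "n - 6 \<in> {1..6}" using 1 m n by auto
      moreover have "a m \<in> u" "b (n - 6) \<in> v" using 1 x m y n by (simp_all add: vx_def)
      ultimately show False using assms(10) by blast
    next
      case 2
      have "n \<in> {1..6}" "m - 6 \<in> {1..6}" using 2 m n by auto
      moreover have "a n \<in> v" "b (m - 6) \<in> u" using 2 x m y n by (simp_all add: vx_def)
      ultimately show False using assms(10) by blast
    qed
  qed
  define W where "W = {f \<in> {1..12}. f \<noteq> m \<and> f \<noteq> n \<and> wit m n f}"
  have cW: "5 \<le> card W" unfolding W_def by (rule comb'[OF m(1) n(1) mn side])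
  define pt where "pt f = (THE p. p \<in> ?P \<and> ?vx f \<in> p)" for f
  have pt: "\<And>f. f \<in> {1..12} \<Longrightarrow> pt f \<in> ?P \<and> ?vx f \<in> pt f"
  proof -
    fix f :: nat assume f: "f \<in> {1..12}"
    have "?vx f \<in> tverts G" by (rule subsetD[OF FG vF[OF f]])
    then have "?vx f \<in> \<Union>?P" by (simp only: un)
    then obtain p where p: "p \<in> ?P" "?vx f \<in> p" by (rule UnionE) simp
    have uniq: "\<And>q. q \<in> ?P \<and> ?vx f \<in> q \<Longrightarrow> q = p"
    proof (rule ccontr)
      fix q assume q: "q \<in> ?P \<and> ?vx f \<in> q" and qp: "q \<noteq> p"
      have "q \<inter> p = {}" using djB[rule_format, OF conjunct1[OF q] p(1) qp] .
      moreover have "?vx f \<in> q \<inter> p" using q p(2) by simp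
      ultimately show False by simp
    qed
    have "pt f = p" unfolding pt_def
    proof (rule the_equality)
      show "p \<in> ?P \<and> ?vx f \<in> p" using p by simp
    next
      fix q assume "q \<in> ?P \<and> ?vx f \<in> q" thus "q = p" by (rule uniq)
    qed
    thus "pt f \<in> ?P \<and> ?vx f \<in> pt f" using p by simp
  qed
  have same: "\<And>p f g. p \<in> ?P \<Longrightarrow> f \<in> {1..12} \<Longrightarrow> g \<in> {1..12} \<Longrightarrow> ?vx f \<in> p \<Longrightarrow> ?vx g \<in> p \<Longrightarrow> f = g"
  proof -
    fix p and f g :: nat assume h: "p \<in> ?P" "f \<in> {1..12}" "g \<in> {1..12}" "?vx f \<in> p" "?vx g \<in> p"
    have "?vx f = ?vx g" using one h vF[OF h(2)] vF[OF h(3)] by blast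
    thus "f = g" using vinj h(2,3) by (simp add: inj_on_eq_iff)
  qed
  have ptinj: "inj_on pt W"
  proof
    fix f g assume "f \<in> W" "g \<in> W" "pt f = pt g"
    then have "f \<in> {1..12}" "g \<in> {1..12}" unfolding W_def by auto
    thus "f = g" using same pt \<open>pt f = pt g\<close> by metis
  qed
  have red: "\<And>f. f \<in> W \<Longrightarrow> pt f \<in> {z. {u \<union> v, z} \<in> tred (contract ?T u v)}"
  proof -
    fix f assume fW: "f \<in> W"
    then have f: "f \<in> {1..12}" "f \<noteq> m" "f \<noteq> n" "wit m n f" unfolding W_def by auto
    let ?z = "pt f"
    have zP: "?z \<in> ?P" and fz: "?vx f \<in> ?z" using pt[OF f(1)] by auto
    have zu: "?z \<noteq> u" using same[OF zP f(1) m(1) fz] x(1) m(2) f(2) by auto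
    have zv: "?z \<noteq> v" using same[OF zP f(1) n(1) fz] y(1) n(2) f(3) by auto
    have chu: "({u,?z} \<in> ?Bk \<longleftrightarrow> allB G u ?z) \<and> ({u,?z} \<in> ?Rd \<longleftrightarrow> \<not> allB G u ?z \<and> \<not> allN G u ?z)"
      using chB uP(1) zP zu by blast
    have chv: "({v,?z} \<in> ?Bk \<longleftrightarrow> allB G v ?z) \<and> ({v,?z} \<in> ?Rd \<longleftrightarrow> \<not> allB G v ?z \<and> \<not> allN G v ?z)"
      using chB uP(2) zP zv by blast
    have xu: "?vx m \<in> u" using x(1) m(2) by simp
    have yv: "?vx n \<in> v" using y(1) n(2) by simp
    have Bu: "allB G u ?z \<Longrightarrow> cB m f"
    proof -
      assume "allB G u ?z" then have "{?vx m, ?vx f} \<in> tblack G" unfolding allB_def using xu fz by blast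
      thus "cB m f" using trB[OF m(1) f(1)] by simp
    qed
    have Bv: "allB G v ?z \<Longrightarrow> cB n f"
    proof -
      assume "allB G v ?z" then have "{?vx n, ?vx f} \<in> tblack G" unfolding allB_def using yv fz by blast
      thus "cB n f" using trB[OF n(1) f(1)] by simp
    qed
    have Nu: "allN G u ?z \<Longrightarrow> \<not> cB m f \<and> \<not> cR m f"
    proof -
      assume "allN G u ?z" then have "{?vx m, ?vx f} \<notin> tblack G \<and> {?vx m, ?vx f} \<notin> tred G" unfolding allN_def using xu fz by blast
      thus "\<not> cB m f \<and> \<not> cR m f" using trB[OF m(1) f(1)] trR[OF m(1) f(1)] by simp
    qed
    have Nv: "allN G v ?z \<Longrightarrow> \<not> cB n f \<and> \<not> cR n f"
    proof -
      assume "allN G v ?z" then have "{?vx n, ?vx f} \<notin> tblack G \<and> {?vx n, ?vx f} \<notin> tred G" unfolding allN_def using yv fz by blast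
      thus "\<not> cB n f \<and> \<not> cR n f" using trB[OF n(1) f(1)] trR[OF n(1) f(1)] by simp
    qed
    have c1: "\<not> ({u, ?z} \<in> ?Bk \<and> {v, ?z} \<in> ?Bk)" using chu chv Bu Bv f(4) unfolding wit_def by blast
    have c2: "\<not> ({u, ?z} \<notin> ?Bk \<union> ?Rd \<and> {v, ?z} \<notin> ?Bk \<union> ?Rd)" using chu chv Nu Nv f(4) unfolding wit_def by blast
    have "{u \<union> v, ?z} \<in> tred (contract ?T u v)"
      unfolding contract_parts using zP zu zv c1 c2 by blast
    thus "?z \<in> {z. {u \<union> v, z} \<in> tred (contract ?T u v)}" by simp
  qed
  have finR: "finite {z. {u \<union> v, z} \<in> tred (contract ?T u v)}"
  proof (rule finite_subset[OF _ fin'])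
    show "{z. {u \<union> v, z} \<in> tred (contract ?T u v)} \<subseteq> tverts (contract ?T u v)"
    proof
      fix z assume "z \<in> {z. {u \<union> v, z} \<in> tred (contract ?T u v)}"
      then have "{u \<union> v, z} \<in> tblack (contract ?T u v) \<union> tred (contract ?T u v)" by simp
      then have "{u \<union> v, z} \<in> {{p,q}|p q. p \<in> tverts (contract ?T u v) \<and> q \<in> tverts (contract ?T u v) \<and> p \<noteq> q}"
        by (rule subsetD[OF ed'])
      then have "\<exists>p q. {u \<union> v, z} = {p,q} \<and> p \<in> tverts (contract ?T u v) \<and> q \<in> tverts (contract ?T u v) \<and> p \<noteq> q"
        by (simp only: mem_Collect_eq)
      then obtain p q where e: "{u \<union> v, z} = {p,q}" and pq: "p \<in> tverts (contract ?T u v)" "q \<in> tverts (contract ?T u v)"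
        by (elim exE conjE) (rule that, assumption+)
      have "z \<in> {u \<union> v, z}" by (rule insertI2, rule singletonI)
      then have "z \<in> {p,q}" by (simp only: e)
      then have "z = p \<or> z = q" by simp
      thus "z \<in> tverts (contract ?T u v)" using pq by (elim disjE) simp_all
    qed
  qed
  have "5 \<le> card W" by (rule cW)
  also have "card W = card (pt ` W)" using card_image[OF ptinj] by simp
  also have "\<dots> \<le> card {z. {u \<union> v, z} \<in> tred (contract ?T u v)}"
    by (rule card_mono[OF finR image_subsetI]) (rule red)
  finally show ?thesis unfolding red_degree_def T' .
qed

end
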